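(* For every discrete distribution $\mu$, $S[\mu]^2\le \frac13 M_2[\mu]\,M_0[\mu]^3$.
   Context: A discrete distribution is a finite set $\mu=\{(x_1,m_1),\dots,(x_k,m_k)\}$ with $x_i\in\mathbb R$ distinct and $m_i>0$. Its moments are $M_j[\mu]=\sum_i m_ix_i^j$. Its spread is $S[\mu]=\sum_{i<j}|x_i-x_j|\,m_im_j$. *)

theory Defs
  imports Complex_Main
begin

definition discrete_dist :: "real set \<Rightarrow> (real \<Rightarrow> real) \<Rightarrow> bool" where
  "discrete_dist X m \<longleftrightarrow> finite X \<and> (\<forall>x\<in>X. m x > 0)"

definition moment :: "nat \<Rightarrow> real set \<Rightarrow> (real \<Rightarrow> real) \<Rightarrow> real" where
  "moment j X m = (\<Sum>x\<in>X. m x * x ^ j)"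

definition spread :: "real set \<Rightarrow> (real \<Rightarrow> real) \<Rightarrow> real" where
  "spread X m = (\<Sum>(x, y)\<in>{(x, y). x \<in> X \<and> y \<in> X \<and> x < y}. \<bar>x - y\<bar> * m x * m y)"

end

theory Submission
  imports Defs "HOL-Analysis.Convex"
begin

definition LL :: "real set \<Rightarrow> (real \<Rightarrow> real) \<Rightarrow> real \<Rightarrow> real" where
  "LL X m x = (\<Sum>y\<in>X. if y < x then m y else 0)"

lemma telescope:
  fixes X :: "real set"
  assumes "finite X"
  shows "(\<Sum>x\<in>X. (s + 2 * LL X m x + 2 * m x)^3 - (s + 2 * LL X m x)^3)
         = (s + 2 * sum m X)^3 - s^3"
  using assms
proof (induct X rule: finite_linorder_max_induct)
  case empty
  then show ?case by simp
next
  case (insert b A)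
  have bA: "b \<notin> A" using insert by auto
  have L1: "LL (insert b A) m x = LL A m x" if "x \<in> A" for x
    using insert that bA by (auto simp: LL_def)
  have L2: "LL (insert b A) m b = sum m A"
    using insert bA by (auto simp: LL_def intro!: sum.cong)
  have "(\<Sum>x\<in>insert b A. (s + 2 * LL (insert b A) m x + 2 * m x)^3 - (s + 2 * LL (insert b A) m x)^3)
     = ((s + 2 * sum m A + 2 * m b)^3 - (s + 2 * sum m A)^3)
       + (\<Sum>x\<in>A. (s + 2 * LL A m x + 2 * m x)^3 - (s + 2 * LL A m x)^3)"
    using insert bA L1 L2 by (simp add: sum.insert)
  also have "\<dots> = (s + 2 * sum m (insert b A))^3 - s^3"
    using insert bA by (simp add: sum.insert add_ac)
  finally show ?case .
qed

lemma pairsum: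
  fixes X :: "real set"
  assumes "finite X"
  shows "(\<Sum>(x, y)\<in>{(x, y). x \<in> X \<and> y \<in> X \<and> x < y}. f x y)
       = (\<Sum>x\<in>X. \<Sum>y\<in>X. if x < y then f x y else 0)"
proof -
  have e: "{(x, y). x \<in> X \<and> y \<in> X \<and> x < y} = {p\<in>X \<times> X. fst p < snd p}"
    by auto
  have "(\<Sum>(x, y)\<in>{(x, y). x \<in> X \<and> y \<in> X \<and> x < y}. f x y)
       = (\<Sum>p\<in>X \<times> X. if fst p < snd p then f (fst p) (snd p) else 0)"
    unfolding e using assms by (subst sum.inter_filter) (auto intro!: sum.cong simp: case_prod_beta)
  also have "\<dots> = (\<Sum>x\<in>X. \<Sum>y\<in>X. if x < y then f x y else 0)"
    by (simp add: sum.cartesian_product split_beta)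
  finally show ?thesis .
qed

theorem mainTheorem5:
  fixes X :: "real set" and m :: "real \<Rightarrow> real"
  assumes "discrete_dist X m"
  shows "(spread X m)^2 \<le> (1/3) * moment 2 X m * (moment 0 X m)^3"
proof -
  have fin: "finite X" and pos: "\<And>x. x \<in> X \<Longrightarrow> m x > 0"
    using assms by (auto simp: discrete_dist_def)
  define W where "W = sum m X"
  define c where "c x = 2 * LL X m x + m x - W" for x
  have M0: "moment 0 X m = W" by (simp add: moment_def W_def)
  have M2: "moment 2 X m = (\<Sum>x\<in>X. m x * x^2)" by (simp add: moment_def)
  have S1: "spread X m = (\<Sum>x\<in>X. \<Sum>y\<in>X. if x < y then (y - x) * m x * m y else 0)"
    unfolding spread_def using pairsum[OF fin, of "\<lambda>x y. \<bar>x - y\<bar> * m x * m y"]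
    by (auto intro!: sum.cong)
  also have "\<dots> = (\<Sum>x\<in>X. \<Sum>y\<in>X. if y < x then x * m x * m y else 0)
                 - (\<Sum>x\<in>X. \<Sum>y\<in>X. if x < y then x * m x * m y else 0)"
  proof -
    have "(\<Sum>x\<in>X. \<Sum>y\<in>X. if x < y then (y - x) * m x * m y else 0)
        = (\<Sum>x\<in>X. \<Sum>y\<in>X. if x < y then y * m x * m y else 0)
          - (\<Sum>x\<in>X. \<Sum>y\<in>X. if x < y then x * m x * m y else 0)"
      by (simp add: sum_subtractf[symmetric] algebra_simps if_distrib cong: if_cong)
    also have "(\<Sum>x\<in>X. \<Sum>y\<in>X. if x < y then y * m x * m y else 0)
        = (\<Sum>y\<in>X. \<Sum>x\<in>X. if x < y then y * m x * m y else 0)"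
      by (rule sum.swap)
    finally show ?thesis by (auto intro!: sum.cong simp: mult_ac)
  qed
  also have "\<dots> = (\<Sum>x\<in>X. m x * x * c x)"
  proof -
    have "(\<Sum>x\<in>X. \<Sum>y\<in>X. if y < x then x * m x * m y else 0) = (\<Sum>x\<in>X. x * m x * LL X m x)"
      by (simp add: LL_def sum_distrib_left if_distrib cong: if_cong)
    moreover have "(\<Sum>x\<in>X. \<Sum>y\<in>X. if x < y then x * m x * m y else 0)
        = (\<Sum>x\<in>X. x * m x * (W - LL X m x - m x))"
    proof (rule sum.cong[OF refl])
      fix x assume xX: "x \<in> X"
      have "W = (\<Sum>y\<in>X. (if y < x then m y else 0) + (if y = x then m y else 0) + (if x < y then m y else 0))"
        unfolding W_def by (rule sum.cong) auto
      also have "\<dots> = LL X m x + m x + (\<Sum>y\<in>X. if x < y then m y else 0)"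
        using fin xX by (simp add: sum.distrib LL_def)
      finally have "(\<Sum>y\<in>X. if x < y then m y else 0) = W - LL X m x - m x" by simp
      moreover have "(\<Sum>y\<in>X. if x < y then x * m x * m y else 0) = (\<Sum>y\<in>X. x * m x * (if x < y then m y else 0))"
        by (rule sum.cong) auto
      ultimately show "(\<Sum>y\<in>X. if x < y then x * m x * m y else 0) = x * m x * (W - LL X m x - m x)"
        by (simp add: sum_distrib_left[symmetric])
    qed
    ultimately show ?thesis
      by (simp add: c_def sum_subtractf[symmetric] algebra_simps)
  qed
  finally have S: "spread X m = (\<Sum>x\<in>X. m x * x * c x)" .
  have CS: "(\<Sum>x\<in>X. (sqrt (m x) * x) * (sqrt (m x) * c x))^2
      \<le> (\<Sum>x\<in>X. (sqrt (m x) * x)^2) * (\<Sum>x\<in>X. (sqrt (m x) * c x)^2)"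
    by (rule Cauchy_Schwarz_ineq_sum)
  have e1: "(\<Sum>x\<in>X. (sqrt (m x) * x) * (sqrt (m x) * c x)) = (\<Sum>x\<in>X. m x * x * c x)"
    using pos by (intro sum.cong) (auto simp: less_imp_le)
  have e2: "(\<Sum>x\<in>X. (sqrt (m x) * x)^2) = (\<Sum>x\<in>X. m x * x^2)"
    using pos by (intro sum.cong) (auto simp: less_imp_le power_mult_distrib)
  have e3: "(\<Sum>x\<in>X. (sqrt (m x) * c x)^2) = (\<Sum>x\<in>X. m x * (c x)^2)"
    using pos by (intro sum.cong) (auto simp: less_imp_le power_mult_distrib)
  have bnd: "(\<Sum>x\<in>X. m x * (c x)^2) \<le> W^3 / 3"
  proof -
    have "(\<Sum>x\<in>X. m x * (c x)^2) \<le> (\<Sum>x\<in>X. ((-W + 2 * LL X m x + 2 * m x)^3 - (-W + 2 * LL X m x)^3) / 6)"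
    proof (rule sum_mono)
      fix x assume "x \<in> X"
      then have "m x > 0" by (rule pos)
      then have "m x ^ 3 \<ge> 0" by simp
      moreover have "((-W + 2 * LL X m x + 2 * m x)^3 - (-W + 2 * LL X m x)^3) / 6
          = m x * (c x)^2 + m x ^ 3 / 3"
        unfolding c_def by (simp add: field_simps power3_eq_cube power2_eq_square; algebra)
      ultimately show "m x * (c x)^2 \<le> ((-W + 2 * LL X m x + 2 * m x)^3 - (-W + 2 * LL X m x)^3) / 6"
        by linarith
    qed
    also have "\<dots> = ((-W + 2 * W)^3 - (-W)^3) / 6"
      using telescope[OF fin, of "-W" m] by (simp add: sum_divide_distrib[symmetric] W_def)
    also have "\<dots> = W^3 / 3" by (simp add: power3_eq_cube)
    finally show ?thesis .
  qed
  have M2nn: "(\<Sum>x\<in>X. m x * x^2) \<ge> 0"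
    using pos by (intro sum_nonneg) (auto simp: less_imp_le)
  have "(spread X m)^2 \<le> (\<Sum>x\<in>X. m x * x^2) * (\<Sum>x\<in>X. m x * (c x)^2)"
    using CS e1 e2 e3 S by simp
  also have "\<dots> \<le> (\<Sum>x\<in>X. m x * x^2) * (W^3 / 3)"
    using bnd M2nn by (rule mult_left_mono)
  finally show ?thesis using M0 M2 by simp
qed

end
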